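(* Let $b\ge3$, $D\subset\{0,\dots,b-1\}$ with $2\le|D|\le b$, list $\mathcal C=\mathcal C_{b,D}$ increasingly as $k_1<k_2<\cdots$, and let $s=\gcd\{d-d':d,d'\in D\}$. Consider $L(\alpha,\beta)=\lim_{N\to\infty}\frac1N\sum_{n=1}^N e(k_n\alpha+s_b(k_n)\beta)$. (1) If $s=1$, the limit exists for all real $\alpha,\beta$; if it is nonzero then there are integers $a,r,t$ with $\alpha\equiv\frac{a}{b-1}+\frac{r}{b^t}$ and $\beta\equiv-\frac{a}{b-1}\pmod 1$. (2) If $s>1$ and $s\mid d$ for all $d\in D$, the limit exists for all $\alpha,\beta$; if it is nonzero then there are integers $a,r,t$ with $s\alpha\equiv\frac{a}{b-1}+\frac{r}{b^t}$ and $s\beta\equiv-\frac{a}{b-1}\pmod 1$. (3) If $s>1$ and $s\nmid d$ for some $d\in D$, then for every $(\alpha,\beta)$ for which there are no integers $a,r,t$ with $s\alpha\equiv\frac{a}{b-1}+\frac{r}{b^t}$ and $s\beta\equiv-\frac{a}{b-1}\pmod 1$, the limit exists and equals $0$. Finally, if at least one of $\alpha,\beta$ is irrational, then $$\lim_{N-M\to\infty}\frac{1}{N-M}\sum_{M<n\le N}e(k_n\alpha+s_b(k_n)\beta)=0,$$ i.e. for every $\eta>0$ there is $L$ such that the average has modulus $<\eta$ whenever $0\le M<N$ and $N-M\ge L$.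
   Context: $\mathcal C_{b,D}=\{\sum_{j=0}^{k} d_j b^j : k\in\mathbb N_0,\ d_j\in D\}$. $s_b(k)$ is the base-$b$ sum of digits of $k$. $e(x)=e^{2\pi i x}$. The number $s$ is the largest integer such that $D$ is contained in an arithmetic progression of step $s$. *)

theory Defs
  imports "HOL-Analysis.Analysis" "HOL-Library.Infinite_Set"
begin

function digsum :: "nat \<Rightarrow> nat \<Rightarrow> nat" where
  "digsum b n = (if b \<le> 1 \<or> n = 0 then 0 else n mod b + digsum b (n div b))"
  by auto
termination
  by (relation "Wellfounded.measure snd") auto

declare digsum.simps [simp del]

definition e :: "real \<Rightarrow> complex" where
  "e x = exp (2 * complex_of_real pi * \<i> * complex_of_real x)"

definition Cset :: "nat \<Rightarrow> nat set \<Rightarrow> nat set" where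
  "Cset b D = {n. \<exists>k::nat. \<exists>d::nat \<Rightarrow> nat. (\<forall>j\<le>k. d j \<in> D) \<and> n = (\<Sum>j\<le>k. d j * b ^ j)}"

definition kseq :: "nat \<Rightarrow> nat set \<Rightarrow> nat \<Rightarrow> nat" where
  "kseq b D n = enumerate (Cset b D) (n - 1)"

definition sD :: "nat set \<Rightarrow> int" where
  "sD D = Gcd {int d - int d' | d d'. d \<in> D \<and> d' \<in> D}"

definition term_e :: "nat \<Rightarrow> nat set \<Rightarrow> real \<Rightarrow> real \<Rightarrow> nat \<Rightarrow> complex" where
  "term_e b D \<alpha> \<beta> n = e (real (kseq b D n) * \<alpha> + real (digsum b (kseq b D n)) * \<beta>)"

definition avgC :: "nat \<Rightarrow> nat set \<Rightarrow> real \<Rightarrow> real \<Rightarrow> nat \<Rightarrow> complex" where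
  "avgC b D \<alpha> \<beta> N = (\<Sum>n=1..N. term_e b D \<alpha> \<beta> n) / of_nat N"

definition cong1 :: "real \<Rightarrow> real \<Rightarrow> bool" where
  "cong1 x y \<longleftrightarrow> x - y \<in> \<int>"

definition exceptional :: "nat \<Rightarrow> int \<Rightarrow> real \<Rightarrow> real \<Rightarrow> bool" where
  "exceptional b c \<alpha> \<beta> \<longleftrightarrow>
     (\<exists>a r t :: int. cong1 (of_int c * \<alpha>) (of_int a / (real b - 1) + of_int r / (real b powi t))
                  \<and> cong1 (of_int c * \<beta>) (- of_int a / (real b - 1)))"

end

theory Submission
  imports Defs
begin


function Hf :: "nat \<Rightarrow> nat \<Rightarrow> (nat \<Rightarrow> nat) \<Rightarrow> nat \<Rightarrow> nat \<Rightarrow> nat" where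
  "Hf b m dl ep n = (if n < m \<or> m < 2 then dl n else dl (n mod m) + b * Hf b m dl ep (n div m - ep))"
  by auto
termination
  by (relation "Wellfounded.measure (\<lambda>(b,m,dl,ep,n). n)") (auto intro: le_less_trans[OF diff_le_self] div_less_dividend)

declare Hf.simps[simp del]

lemma strict_mono_range_unique:
  fixes f g :: "nat \<Rightarrow> nat"
  assumes "strict_mono f" "strict_mono g" "range f = range g"
  shows "f n = g n"
proof (induction n rule: less_induct)
  case (less n)
  show ?case
  proof (rule ccontr)
    assume ne: "f n \<noteq> g n"
    show False
    proof (cases "f n < g n")
      case True
      have "f n \<in> range g" using assms(3) by auto
      then obtain j where j: "f n = g j" by auto
      show False
      proof (cases "j < n")
        case True
        then have "g j = f j" using less by simp
        moreover have "f j < f n" using True assms(1) by (simp add: strict_mono_less)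
        ultimately show False using j by simp
      next
        case False
        then have "g n \<le> g j" using assms(2) by (simp add: strict_mono_less_eq)
        then show False using j \<open>f n < g n\<close> by simp
      qed
    next
      case False
      then have lt: "g n < f n" using ne by simp
      have "g n \<in> range f" using assms(3) by auto
      then obtain j where j: "g n = f j" by auto
      show False
      proof (cases "j < n")
        case True
        then have "g j = f j" using less by simp
        moreover have "g j < g n" using True assms(2) by (simp add: strict_mono_less)
        ultimately show False using j by simp
      next
        case False
        then have "f n \<le> f j" using assms(1) by (simp add: strict_mono_less_eq)
        then show False using j lt by simp
      qed
    qed
  qed
qed

lemma e_add: "e (x + y) = e x * e y"
  unfolding e_def by (simp add: distrib_left distrib_right exp_add)

lemma norm_e[simp]: "norm (e x) = 1"
  unfolding e_def by (simp add: norm_exp_eq_Re)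

lemma e_zero[simp]: "e 0 = 1" unfolding e_def by simp

lemma e_eq_1_iff: "e x = 1 \<longleftrightarrow> x \<in> \<int>"
proof -
  have "e x = 1 \<longleftrightarrow> (\<exists>n::int. 2 * pi * x = of_int (2 * n) * pi)"
    unfolding e_def exp_eq_1 by simp
  also have "\<dots> \<longleftrightarrow> (\<exists>n::int. x = of_int n)" by (auto simp: algebra_simps)
  also have "\<dots> \<longleftrightarrow> x \<in> \<int>" by (auto simp: Ints_def)
  finally show ?thesis .
qed

lemma e_nat_mult: "e (of_nat n * x) = e x ^ n"
  unfolding e_def by (simp flip: exp_of_nat_mult add: mult_ac)

lemma e_minus: "e (- x) = inverse (e x)"
  unfolding e_def by (simp add: exp_minus[symmetric])

lemma e_int_mult: "e (of_int u * x) = e x powi u"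
proof (cases "u \<ge> 0")
  case True
  then obtain n where "u = int n" by (intro that[of "nat u"]) simp
  then show ?thesis using e_nat_mult[of n x] by (simp add: power_int_def)
next
  case False
  then obtain n where "u = - int n" using False by (intro that[of "nat (-u)"]) simp
  then have "e (of_int u * x) = inverse (e (of_nat n * x))" by (simp flip: e_minus)
  then show ?thesis using e_nat_mult[of n x] \<open>u = - int n\<close> by (simp add: power_int_def power_inverse)
qed

lemma sum_split_add: "(\<Sum>k<a+(c::nat). f k) = (\<Sum>k<a. f k) + (\<Sum>k<c. f (a+k))"
  by (induction c) (simp_all add: add.assoc)

lemma sum_blocks: "(\<Sum>k<(c::nat)*m. f k) = (\<Sum>j<c. \<Sum>i<m. f (j*m+i))"
proof (induction c)
  case 0 then show ?case by simp
next
  case (Suc c)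
  have "(\<Sum>k<Suc c*m. f k) = (\<Sum>k<c*m+m. f k)" by (simp add: add.commute)
  also have "\<dots> = (\<Sum>k<c*m. f k) + (\<Sum>i<m. f (c*m+i))" by (rule sum_split_add)
  finally show ?case using Suc by simp
qed

lemma digsum0[simp]: "digsum b 0 = 0" by (simp add: digsum.simps)

lemma digsum_step:
  assumes "b \<ge> 2" "x < b"
  shows "digsum b (x + b * y) = x + digsum b y"
proof (cases "x + b * y = 0")
  case True
  then have "x = 0" "y = 0" using assms by auto
  then show ?thesis by (simp add: digsum.simps)
next
  case False
  have "(x + b*y) mod b = x" using assms by simp
  moreover have "(x + b*y) div b = y" using assms by simp
  moreover have "digsum b (x + b*y) = (x+b*y) mod b + digsum b ((x+b*y) div b)"
    using False assms digsum0 by (simp add: digsum.simps[of b "x+b*y"])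
  ultimately show ?thesis by simp
qed

locale dig =
  fixes b :: nat and D :: "nat set"
  assumes b3: "b \<ge> 3" and Dsub: "D \<subseteq> {0..<b}" and card2: "2 \<le> card D"
begin

definition m where "m = card D"
definition dl where "dl = enumerate D"
definition ep :: nat where "ep = (if 0 \<in> D then 0 else 1)"
abbreviation H where "H \<equiv> Hf b m dl ep"

lemma finD: "finite D" using Dsub finite_subset by blast
lemma m2: "m \<ge> 2" using card2 by (simp add: m_def)
lemma dl_in: "i < m \<Longrightarrow> dl i \<in> D" using finD by (simp add: m_def dl_def finite_enumerate_in_set)
lemma dl_lt_b: "i < m \<Longrightarrow> dl i < b" using dl_in Dsub by fastforce
lemma dl_mono: "i < j \<Longrightarrow> j < m \<Longrightarrow> dl i < dl j" using finD by (simp add: m_def dl_def finite_enumerate_mono)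
lemma dl_bij: "bij_betw dl {..<m} D" using finD by (simp add: m_def dl_def finite_bij_enumerate)
lemma dl_surj: "d \<in> D \<Longrightarrow> \<exists>i<m. dl i = d" using dl_bij by (metis bij_betw_def imageE lessThan_iff)
lemma dl0: "0 \<in> D \<Longrightarrow> dl 0 = 0"
proof -
  assume "0 \<in> D"
  then obtain i where "i < m" "dl i = 0" using dl_surj by blast
  then show "dl 0 = 0" using dl_mono[of 0 i] by (cases i) auto
qed
lemma dl_pos: "0 \<notin> D \<Longrightarrow> i < m \<Longrightarrow> dl i > 0" using dl_in by (metis gr0I)
lemma b2: "b \<ge> 2" using b3 by simp

lemma H_simp: "H n = (if n < m then dl n else dl (n mod m) + b * H (n div m - ep))"
  using m2 by (subst Hf.simps) auto

lemma H_step: "n \<ge> m \<Longrightarrow> H n = dl (n mod m) + b * H (n div m - ep)"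
  using H_simp by simp

lemma H_block: "q \<ge> ep \<Longrightarrow> i < m \<Longrightarrow> H (q * m + i) = dl i + b * H (q - ep)"
proof (cases "q = 0")
  case True
  assume "q \<ge> ep" "i < m"
  then have "ep = 0" using True by simp
  then have "0 \<in> D" by (auto simp: ep_def split: if_splits)
  then have "H 0 = 0" using dl0 m2 by (subst H_simp) simp
  then show ?thesis using True \<open>i<m\<close> \<open>ep = 0\<close> by (subst H_simp) simp
next
  case False
  assume "q \<ge> ep" "i < m"
  then have "q * m + i \<ge> m" using False by (simp add: trans_le_add1)
  moreover have "(q*m+i) mod m = i" "(q*m+i) div m = q" using \<open>i<m\<close> by auto
  ultimately show ?thesis by (simp add: H_step)
qed

lemma H_pos: "0 \<notin> D \<Longrightarrow> H n > 0"
  using m2 dl_pos by (subst H_simp) (auto simp: pos_mod_bound)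

lemma H_mono: "n < n' \<Longrightarrow> H n < H n'"
proof (induction n' arbitrary: n rule: less_induct)
  case (less n')
  show ?case
  proof (cases "n' < m")
    case True
    then show ?thesis using less.prems dl_mono by (simp add: H_simp)
  next
    case n'big: False
    have qlt: "n' div m - ep < n'" using m2 n'big
      by (meson div_less_dividend le_less_trans diff_le_self less_le_trans numeral_le_one_iff one_less_numeral_iff semiring_norm(69) less_2_cases_iff not_le)
    have Hn': "H n' = dl (n' mod m) + b * H (n' div m - ep)" using n'big by (simp add: H_step)
    show ?thesis
    proof (cases "n < m")
      case True
      have "H n < b" using True dl_lt_b by (simp add: H_simp)
      moreover have "H (n' div m - ep) \<ge> 1"
      proof (cases "0 \<in> D")
        case True
        then have "ep = 0" by (simp add: ep_def)
        have "n' div m \<ge> 1" using n'big m2 by (simp add: le_div_geq)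
        then have "H 0 < H (n' div m - ep)" using less.IH[OF qlt] \<open>ep = 0\<close> by simp
        then show ?thesis by simp
      next
        case False
        then show ?thesis using H_pos by (simp add: Suc_leI)
      qed
      ultimately show ?thesis using Hn' by (metis add.commute less_le_trans mult_le_mono2 nat_mult_1_right trans_le_add1)
    next
      case nbig: False
      have Hn: "H n = dl (n mod m) + b * H (n div m - ep)" using nbig by (simp add: H_step)
      have dle: "n div m \<le> n' div m" using less.prems by (simp add: div_le_mono)
      have ep1: "ep \<le> 1" by (simp add: ep_def)
      have nd1: "n div m \<ge> 1" using nbig m2 by (simp add: le_div_geq)
      show ?thesis
      proof (cases "n div m - ep < n' div m - ep")
        case True
        have "H (n div m - ep) < H (n' div m - ep)" using less.IH[OF qlt True] .
        then have "H (n div m - ep) + 1 \<le> H (n' div m - ep)" by simp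
        then have "b * (H (n div m - ep) + 1) \<le> b * H (n' div m - ep)" by (rule mult_le_mono2)
        moreover have "dl (n mod m) < b" using dl_lt_b m2 by simp
        ultimately show ?thesis using Hn Hn' by (simp add: algebra_simps)
      next
        case False
        then have eq: "n div m = n' div m" using dle ep1 nd1 by linarith
        then have "n mod m < n' mod m" using less.prems
          by (metis div_mod_decomp add_less_cancel_left not_less le_less_trans less_imp_le_nat nat_neq_iff)
        then have "dl (n mod m) < dl (n' mod m)" using dl_mono m2 by simp
        then show ?thesis using Hn Hn' eq by simp
      qed
    qed
  qed
qed



end

context dig begin
lemma sum_atMost_Suc_shift': "(\<Sum>j\<le>Suc k. f j) = f 0 + (\<Sum>j\<le>k. f (Suc j))" for f :: "nat \<Rightarrow> nat"
  by (induction k) (simp_all add: add.assoc)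

lemma CsetI: "\<forall>j\<le>k. d j \<in> D \<Longrightarrow> n = (\<Sum>j\<le>k. d j * b ^ j) \<Longrightarrow> n \<in> Cset b D"
  unfolding Cset_def by (intro CollectI exI conjI)

lemma H_in_C: "H n \<in> Cset b D"
proof (induction n rule: less_induct)
  case (less n)
  show ?case
  proof (cases "n < m")
    case True
    have "H n = (\<Sum>j\<le>0. (\<lambda>_. dl n) j * b ^ j)" using True by (simp add: H_simp)
    moreover have "\<forall>j\<le>0. (\<lambda>_. dl n) j \<in> D" using dl_in True by simp
    ultimately show ?thesis by (intro CsetI)
  next
    case False
    have "n div m < n" using m2 False by (intro div_less_dividend) auto
    then have ql: "n div m - ep < n" by linarith
    obtain k d where kd: "\<forall>j\<le>k. d j \<in> D" "H (n div m - ep) = (\<Sum>j\<le>k. d j * b ^ j)"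
      using less.IH[OF ql] unfolding Cset_def by blast
    define d' where "d' = (\<lambda>j. if j = 0 then dl (n mod m) else d (j - 1))"
    have "\<forall>j\<le>Suc k. d' j \<in> D" using kd(1) dl_in m2 by (auto simp: d'_def)
    moreover have "H n = (\<Sum>j\<le>Suc k. d' j * b ^ j)"
    proof -
      have "(\<Sum>j\<le>Suc k. d' j * b ^ j) = d' 0 + (\<Sum>j\<le>k. d' (Suc j) * b ^ Suc j)"
        by (simp only: sum_atMost_Suc_shift') simp
      also have "\<dots> = dl (n mod m) + b * (\<Sum>j\<le>k. d j * b ^ j)"
        by (simp add: d'_def sum_distrib_left mult_ac)
      finally show ?thesis using kd(2) False by (simp add: H_step)
    qed
    ultimately show ?thesis by (intro CsetI)
  qed
qed


lemma C_in_H: "\<forall>j\<le>k. d j \<in> D \<Longrightarrow> \<exists>n. H n = (\<Sum>j\<le>k. d j * b ^ j)"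
proof (induction k arbitrary: d)
  case 0
  then obtain i where "i < m" "dl i = d 0" using dl_surj by blast
  then show ?case by (intro exI[of _ i]) (simp add: H_simp)
next
  case (Suc k)
  obtain n' where n': "H n' = (\<Sum>j\<le>k. d (Suc j) * b ^ j)" using Suc.IH[of "\<lambda>j. d (Suc j)"] Suc.prems by auto
  obtain i where i: "i < m" "dl i = d 0" using dl_surj Suc.prems by blast
  have "H ((n' + ep) * m + i) = dl i + b * H n'" using H_block[of "n'+ep" i] i by simp
  also have "\<dots> = (\<Sum>j\<le>Suc k. d j * b ^ j)"
    using n' i by (simp only: sum_atMost_Suc_shift') (simp add: sum_distrib_left mult_ac)
  finally show ?case by blast
qed

lemma range_H: "range H = Cset b D"
proof
  show "range H \<subseteq> Cset b D" using H_in_C by auto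
  show "Cset b D \<subseteq> range H"
  proof
    fix x assume "x \<in> Cset b D"
    then obtain k d where kd: "\<forall>j\<le>k. d j \<in> D" "x = (\<Sum>j\<le>k. d j * b ^ j)"
      unfolding Cset_def by auto
    then obtain n where "H n = x" using C_in_H by metis
    then show "x \<in> range H" by auto
  qed
qed

lemma strict_mono_H: "strict_mono H" using H_mono by (simp add: strict_mono_def)

lemma infinite_C: "infinite (Cset b D)"
proof -
  have "inj H" using strict_mono_H strict_mono_on_imp_inj_on[of UNIV H] by simp
  then show ?thesis using range_inj_infinite[of H] range_H by simp
qed

lemma kseq_H: "kseq b D n = H (n - 1)"
  unfolding kseq_def
  using strict_mono_range_unique[OF strict_mono_enumerate[OF infinite_C] strict_mono_H]
    range_enumerate[OF infinite_C] range_H by simp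

end

context dig begin

definition P :: "real \<Rightarrow> real \<Rightarrow> nat \<Rightarrow> complex" where
  "P \<beta> \<alpha> n = e (real (H n) * \<alpha> + real (digsum b (H n)) * \<beta>)"

definition Q :: "real \<Rightarrow> complex" where
  "Q x = (\<Sum>d\<in>D. e (real d * x))"

definition rho :: "real \<Rightarrow> real" where
  "rho x = norm (Q x) / real m"

definition WS :: "real \<Rightarrow> real \<Rightarrow> nat \<Rightarrow> nat \<Rightarrow> complex" where
  "WS \<beta> \<alpha> M L = (\<Sum>k<L. P \<beta> \<alpha> (M + k))"

lemma term_P: "n \<ge> 1 \<Longrightarrow> term_e b D \<alpha> \<beta> n = P \<beta> \<alpha> (n - 1)"
  unfolding term_e_def P_def kseq_H by simp

lemma Q_dl: "(\<Sum>i<m. e (real (dl i) * x)) = Q x"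
  unfolding Q_def using sum.reindex_bij_betw[OF dl_bij, of "\<lambda>d. e (real d * x)"] by simp

lemma norm_Q: "norm (Q x) \<le> real m"
proof -
  have "norm (Q x) \<le> (\<Sum>d\<in>D. norm (e (real d * x)))" unfolding Q_def by (rule norm_sum)
  also have "\<dots> = real m" by (simp add: m_def)
  finally show ?thesis .
qed

lemma rho_le1: "rho x \<le> 1" and rho_ge0: "rho x \<ge> 0"
  using norm_Q m2 by (auto simp: rho_def divide_le_eq_1)

lemma H_block_ds: "q \<ge> ep \<Longrightarrow> i < m \<Longrightarrow> digsum b (H (q * m + i)) = dl i + digsum b (H (q - ep))"
  using H_block digsum_step[OF b2 dl_lt_b] by simp

lemma P_block: "q \<ge> ep \<Longrightarrow> i < m \<Longrightarrow>
   P \<beta> \<alpha> (q * m + i) = e (real (dl i) * (\<alpha> + \<beta>)) * P \<beta> (real b * \<alpha>) (q - ep)"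
proof -
  assume a: "q \<ge> ep" "i < m"
  have "real (H (q*m+i)) * \<alpha> + real (digsum b (H (q*m+i))) * \<beta> =
        real (dl i) * (\<alpha> + \<beta>) + (real (H (q - ep)) * (real b * \<alpha>) + real (digsum b (H (q-ep))) * \<beta>)"
    using H_block[OF a] H_block_ds[OF a] by (simp add: algebra_simps)
  then show ?thesis unfolding P_def by (simp add: e_add)
qed

lemma norm_P[simp]: "norm (P \<beta> \<alpha> n) = 1" unfolding P_def by simp

lemma norm_sumP: "norm (\<Sum>k<L. P \<beta> \<alpha> (f k)) \<le> real L"
proof -
  have "norm (\<Sum>k<L. P \<beta> \<alpha> (f k)) \<le> (\<Sum>k<L. norm (P \<beta> \<alpha> (f k)))" by (rule norm_sum)
  then show ?thesis by simp
qed

lemma norm_WS: "norm (WS \<beta> \<alpha> M L) \<le> real L"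
  unfolding WS_def by (rule norm_sumP)

lemma WS_decomp:
  "\<exists>M' K. m * K \<le> L \<and> norm (WS \<beta> \<alpha> M L) \<le> 2 * real m + norm (Q (\<alpha> + \<beta>)) * norm (WS \<beta> (real b * \<alpha>) M' K)"
proof -
  define c where "c = (M + m - 1) div m"
  define q0 where "q0 = max c ep"
  define q1 where "q1 = (M + L) div m"
  have cm: "c * m + (M + m - 1) mod m = M + m - 1" unfolding c_def by simp
  have mlt: "(M + m - 1) mod m < m" using m2 by simp
  have ep1: "ep \<le> 1" by (simp add: ep_def)
  have cM: "c * m \<ge> M" using cm mlt m2 by linarith
  have "q0 \<ge> c" unfolding q0_def by simp
  then have "q0 * m \<ge> c * m" by simp
  then have q0ge: "q0 * m \<ge> M" using cM by linarith
  have q0le: "q0 * m \<le> M + m"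
  proof (cases "c \<le> ep")
    case True then have "q0 = ep" by (simp add: q0_def)
    moreover have "ep = 0 \<or> ep = 1" using ep1 by auto
    ultimately show ?thesis by auto
  next
    case False then have "q0 = c" by (simp add: q0_def)
    then show ?thesis using cm m2 by simp
  qed
  have q1m: "q1 * m + (M + L) mod m = M + L" unfolding q1_def by simp
  have mlt2: "(M + L) mod m < m" using m2 by simp
  show ?thesis
  proof (cases "q1 \<le> q0")
    case True
    have "q1 * m \<le> q0 * m" using True by simp
    then have "L < 2 * m" using q1m mlt2 q0le by linarith
    then have "norm (WS \<beta> \<alpha> M L) \<le> 2 * real m" using norm_WS[of \<beta> \<alpha> M L] by linarith
    then show ?thesis by (intro exI[of _ 0] exI[of _ 0]) (simp add: WS_def)
  next
    case False
    define A where "A = q0 * m - M"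
    define K where "K = q1 - q0"
    define C where "C = M + L - q1 * m"
    have Am: "A \<le> m" using q0le unfolding A_def by simp
    have Cm: "C < m" using q1m mlt2 unfolding C_def by simp
    have Kq: "q0 * m + K * m = q1 * m" using False unfolding K_def by (simp add: algebra_simps)
    have LL: "L = (A + K * m) + C" using q0ge q1m Kq unfolding A_def C_def by (simp add: algebra_simps)
    have MA: "M + A = q0 * m" using q0ge unfolding A_def by simp
    have split: "WS \<beta> \<alpha> M L = (\<Sum>k<A. P \<beta> \<alpha> (M + k)) + (\<Sum>k<K*m. P \<beta> \<alpha> (q0*m + k))
        + (\<Sum>k<C. P \<beta> \<alpha> (M + (A + K*m) + k))"
      unfolding WS_def LL sum_split_add by (simp add: MA flip: add.assoc)
    have mid: "(\<Sum>k<K*m. P \<beta> \<alpha> (q0*m + k)) = Q (\<alpha> + \<beta>) * WS \<beta> (real b * \<alpha>) (q0 - ep) K"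
    proof -
      have "(\<Sum>k<K*m. P \<beta> \<alpha> (q0*m + k)) = (\<Sum>j<K. \<Sum>i<m. P \<beta> \<alpha> (q0*m + (j*m+i)))"
        by (rule sum_blocks)
      also have "\<dots> = (\<Sum>j<K. \<Sum>i<m. e (real (dl i) * (\<alpha> + \<beta>)) * P \<beta> (real b * \<alpha>) (q0 - ep + j))"
      proof (intro sum.cong refl)
        fix j i assume "j \<in> {..<K}" "i \<in> {..<m}"
        have "q0 + j \<ge> ep" unfolding q0_def by simp
        then have "P \<beta> \<alpha> ((q0 + j) * m + i) = e (real (dl i) * (\<alpha> + \<beta>)) * P \<beta> (real b * \<alpha>) (q0 + j - ep)"
          using \<open>i \<in> {..<m}\<close> by (intro P_block) auto
        moreover have "q0 + j - ep = q0 - ep + j" using \<open>q0 + j \<ge> ep\<close> unfolding q0_def by simp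
        ultimately show "P \<beta> \<alpha> (q0*m + (j*m+i)) = e (real (dl i) * (\<alpha> + \<beta>)) * P \<beta> (real b * \<alpha>) (q0 - ep + j)"
          by (simp add: algebra_simps)
      qed
      also have "\<dots> = (\<Sum>j<K. Q (\<alpha> + \<beta>) * P \<beta> (real b * \<alpha>) (q0 - ep + j))"
        by (simp add: sum_distrib_right[symmetric] Q_dl)
      also have "\<dots> = Q (\<alpha> + \<beta>) * WS \<beta> (real b * \<alpha>) (q0 - ep) K"
        unfolding WS_def by (simp add: sum_distrib_left)
      finally show ?thesis .
    qed
    have "norm (WS \<beta> \<alpha> M L) \<le> norm (\<Sum>k<A. P \<beta> \<alpha> (M + k)) + norm (\<Sum>k<K*m. P \<beta> \<alpha> (q0*m + k))
        + norm (\<Sum>k<C. P \<beta> \<alpha> (M + (A + K*m) + k))"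
      unfolding split by (meson norm_triangle_ineq add_mono order_trans order_refl)
    also have "\<dots> \<le> real A + norm (Q (\<alpha> + \<beta>)) * norm (WS \<beta> (real b * \<alpha>) (q0 - ep) K) + real C"
      unfolding mid norm_mult by (intro add_mono norm_sumP order_refl)
    also have "\<dots> \<le> 2 * real m + norm (Q (\<alpha> + \<beta>)) * norm (WS \<beta> (real b * \<alpha>) (q0 - ep) K)"
      using Am Cm by simp
    finally have "norm (WS \<beta> \<alpha> M L) \<le> 2 * real m + norm (Q (\<alpha> + \<beta>)) * norm (WS \<beta> (real b * \<alpha>) (q0 - ep) K)" .
    moreover have "m * K \<le> L" using LL by simp
    ultimately show ?thesis by blast
  qed
qed

end

context dig begin

lemma prod_rho_ge0: "(\<Prod>j<t. rho (f j)) \<ge> 0" by (intro prod_nonneg) (simp add: rho_ge0)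
lemma prod_rho_le1: "(\<Prod>j<t. rho (f j)) \<le> 1" by (intro prod_le_1) (simp_all add: rho_ge0 rho_le1)

lemma WS_bound:
  "norm (WS \<beta> \<alpha> M L) \<le> 2 * (real m ^ (t+1) - real m) + real L * (\<Prod>j<t. rho (real b ^ j * \<alpha> + \<beta>))"
proof (induction t arbitrary: \<alpha> M L)
  case 0
  then show ?case using norm_WS[of \<beta> \<alpha> M L] by simp
next
  case (Suc t)
  obtain M' K where MK: "m * K \<le> L"
    "norm (WS \<beta> \<alpha> M L) \<le> 2 * real m + norm (Q (\<alpha> + \<beta>)) * norm (WS \<beta> (real b * \<alpha>) M' K)"
    using WS_decomp by blast
  define Pi' where "Pi' = (\<Prod>j<t. rho (real b ^ j * (real b * \<alpha>) + \<beta>))"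
  define Bt where "Bt = 2 * (real m ^ (t+1) - real m)"
  define q where "q = norm (Q (\<alpha> + \<beta>))"
  have IH: "norm (WS \<beta> (real b * \<alpha>) M' K) \<le> Bt + real K * Pi'"
    using Suc.IH[of "real b * \<alpha>" M' K] unfolding Pi'_def Bt_def .
  have mpos: "real m > 0" using m2 by simp
  have q_eq: "q = real m * rho (\<alpha> + \<beta>)" unfolding q_def rho_def using mpos by simp
  have q0: "q \<ge> 0" and qm: "q \<le> real m" unfolding q_def using norm_Q by auto
  have Pi0: "Pi' \<ge> 0" unfolding Pi'_def by (rule prod_rho_ge0)
  have mpow: "real m ^ (t+1) \<ge> real m" using m2
    by (metis One_nat_def add_gr_0 le_add2 less_numeral_extra(1) of_nat_le_iff of_nat_power power_increasing power_one_right numeral_le_one_iff one_le_numeral Suc_leD le_trans semiring_norm(69) not_less_eq_eq)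
  have Bt0: "Bt \<ge> 0" unfolding Bt_def using mpow by simp
  have "norm (WS \<beta> \<alpha> M L) \<le> 2 * real m + q * (Bt + real K * Pi')"
    using MK(2) IH q0 unfolding q_def[symmetric] by (meson add_left_mono mult_left_mono order_trans)
  also have "\<dots> = 2 * real m + q * Bt + rho (\<alpha> + \<beta>) * (real m * real K) * Pi'"
    by (simp add: q_eq algebra_simps)
  also have "\<dots> \<le> 2 * real m + real m * Bt + rho (\<alpha> + \<beta>) * real L * Pi'"
  proof -
    have "q * Bt \<le> real m * Bt" using qm Bt0 by (rule mult_right_mono)
    moreover have "rho (\<alpha> + \<beta>) * (real m * real K) * Pi' \<le> rho (\<alpha> + \<beta>) * real L * Pi'"
    proof -
      have "real m * real K \<le> real L" using MK(1) by (metis of_nat_le_iff of_nat_mult)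
      then show ?thesis using rho_ge0 Pi0 by (intro mult_right_mono mult_left_mono) auto
    qed
    ultimately show ?thesis by simp
  qed
  also have "\<dots> \<le> 2 * (real m ^ (Suc t + 1) - real m) + real L * (\<Prod>j<Suc t. rho (real b ^ j * \<alpha> + \<beta>))"
  proof -
    have pr: "(\<Prod>j<Suc t. rho (real b ^ j * \<alpha> + \<beta>)) = rho (\<alpha> + \<beta>) * Pi'"
      unfolding Pi'_def by (subst prod.lessThan_Suc_shift) (simp add: mult_ac)
    have "2 * real m + real m * Bt \<le> 2 * (real m ^ (Suc t + 1) - real m)"
    proof -
      have "real m * Bt = 2 * real m ^ (Suc t + 1) - 2 * real m * real m" unfolding Bt_def by (simp add: algebra_simps)
      moreover have "4 * real m \<le> 2 * real m * real m" using m2 by (simp add: mult_right_mono)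
      ultimately show ?thesis by simp
    qed
    then show ?thesis unfolding pr by (simp add: mult_ac)
  qed
  finally show ?case .
qed

end

context dig begin

lemma uniform_from_prod:
  assumes p0: "(\<lambda>t. \<Prod>j<t. rho (real b ^ j * \<alpha> + \<beta>)) \<longlonglongrightarrow> 0" and eta: "\<eta> > 0"
  shows "\<exists>L0::nat. \<forall>M L. L \<ge> L0 \<and> L > 0 \<longrightarrow> norm (WS \<beta> \<alpha> M L) / real L < \<eta>"
proof -
  have "\<forall>\<^sub>F t in sequentially. norm (\<Prod>j<t. rho (real b ^ j * \<alpha> + \<beta>)) < \<eta>/2"
    using p0 eta by (auto dest!: tendstoD[where e="\<eta>/2"] simp: dist_norm)
  then obtain t where t: "norm (\<Prod>j<t. rho (real b ^ j * \<alpha> + \<beta>)) < \<eta>/2"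
    unfolding eventually_sequentially by blast
  define p where "p = (\<Prod>j<t. rho (real b ^ j * \<alpha> + \<beta>))"
  define B where "B = 2 * (real m ^ (t+1) - real m)"
  have pl: "p < \<eta>/2" using t prod_rho_ge0 unfolding p_def by simp
  define L0 where "L0 = nat (ceiling (2 * B / \<eta>)) + 1"
  show ?thesis
  proof (intro exI[of _ L0] allI impI)
    fix M L assume a: "L0 \<le> L \<and> 0 < L"
    have Lpos: "real L > 0" using a by simp
    have "real L > 2 * B / \<eta>"
    proof -
      have "2 * B / \<eta> \<le> real (nat (ceiling (2 * B / \<eta>)))" by linarith
      also have "\<dots> < real L0" unfolding L0_def by simp
      also have "\<dots> \<le> real L" using a by simp
      finally show ?thesis .
    qed
    then have "2 * B < real L * \<eta>" using eta by (simp add: field_simps)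
    then have BL: "B / real L < \<eta> / 2" using Lpos by (simp add: field_simps)
    have "norm (WS \<beta> \<alpha> M L) \<le> B + real L * p" unfolding B_def p_def by (rule WS_bound)
    then have "norm (WS \<beta> \<alpha> M L) / real L \<le> (B + real L * p) / real L" using Lpos by (simp add: divide_right_mono)
    also have "\<dots> = B / real L + p" using Lpos by (simp add: field_simps)
    also have "\<dots> < \<eta>" using BL pl by linarith
    finally show "norm (WS \<beta> \<alpha> M L) / real L < \<eta>" .
  qed
qed

lemma avg_to_0:
  assumes p0: "(\<lambda>t. \<Prod>j<t. rho (real b ^ j * \<alpha> + \<beta>)) \<longlonglongrightarrow> 0"
  shows "(\<lambda>N. WS \<beta> \<alpha> 0 N / of_nat N) \<longlonglongrightarrow> 0"
proof (rule LIMSEQ_I)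
  fix r :: real assume "r > 0"
  obtain L0 where L0: "\<forall>M L. L \<ge> L0 \<and> L > 0 \<longrightarrow> norm (WS \<beta> \<alpha> M L) / real L < r"
    using uniform_from_prod[OF p0 \<open>r>0\<close>] by blast
  show "\<exists>no. \<forall>n\<ge>no. norm (WS \<beta> \<alpha> 0 n / of_nat n - 0) < r"
  proof (intro exI[of _ "L0 + 1"] allI impI)
    fix n assume "L0 + 1 \<le> n"
    then have "norm (WS \<beta> \<alpha> 0 n) / real n < r" using L0 by auto
    then show "norm (WS \<beta> \<alpha> 0 n / of_nat n - 0) < r" by (simp add: norm_divide)
  qed
qed

lemma sum_greaterThanAtMost_shift: "(\<Sum>n\<in>{M<..M+L}. g n) = (\<Sum>k<L. g (M + 1 + k))" for g :: "nat \<Rightarrow> complex"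
proof (induction L)
  case 0 then show ?case by simp
next
  case (Suc L)
  have "{M<..M + Suc L} = insert (M + Suc L) {M<..M+L}" by auto
  then show ?case using Suc by simp
qed

lemma window_WS: "M \<le> N \<Longrightarrow> (\<Sum>n\<in>{M<..N}. term_e b D \<alpha> \<beta> n) = WS \<beta> \<alpha> M (N - M)"
proof -
  assume "M \<le> N"
  then have "(\<Sum>n\<in>{M<..N}. term_e b D \<alpha> \<beta> n) = (\<Sum>n\<in>{M<..M+(N-M)}. term_e b D \<alpha> \<beta> n)" by simp
  also have "\<dots> = (\<Sum>k<N-M. term_e b D \<alpha> \<beta> (M + 1 + k))" by (rule sum_greaterThanAtMost_shift)
  also have "\<dots> = WS \<beta> \<alpha> M (N - M)" unfolding WS_def by (simp add: term_P)
  finally show ?thesis .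
qed

lemma avgC_WS: "avgC b D \<alpha> \<beta> N = WS \<beta> \<alpha> 0 N / of_nat N"
proof -
  have "{1..N} = {0<..N}" by auto
  then show ?thesis unfolding avgC_def using window_WS[of 0 N \<alpha> \<beta>] by simp
qed

end

context dig begin

lemma rho_to_1:
  assumes np: "\<not> (\<lambda>t. \<Prod>j<t. rho (f j)) \<longlonglongrightarrow> 0"
  shows "(\<lambda>j. rho (f j)) \<longlonglongrightarrow> 1"
proof -
  define p where "p t = (\<Prod>j<t. rho (f j))" for t
  have p0: "p t \<ge> 0" for t unfolding p_def by (rule prod_rho_ge0)
  have pS: "p (Suc n) = p n * rho (f n)" for n unfolding p_def by simp
  have "decseq p"
  proof (rule decseq_SucI)
    fix n show "p (Suc n) \<le> p n" unfolding pS using p0[of n] rho_le1[of "f n"]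
      by (simp add: mult_left_le)
  qed
  then obtain L where L: "p \<longlonglongrightarrow> L" "\<forall>i. L \<le> p i"
    using decseq_convergent[of p 0] p0 by blast
  have "L \<ge> 0" using L(1) p0 by (intro LIMSEQ_le_const[OF L(1)]) auto
  moreover have "L \<noteq> 0" using np L(1) unfolding p_def by auto
  ultimately have Lpos: "L > 0" by simp
  have "(\<lambda>n. p (Suc n) / p n) \<longlonglongrightarrow> L / L"
    using L(1) Lpos by (intro tendsto_divide LIMSEQ_Suc) auto
  moreover have "p (Suc n) / p n = rho (f n)" for n
  proof -
    have "p n > 0" using L(2)[rule_format, of n] Lpos by linarith
    then show ?thesis by (simp add: pS)
  qed
  ultimately show ?thesis using Lpos by simp
qed

lemma unit_identity:
  fixes w :: complex
  assumes "norm w = 1"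
  shows "norm (w - 1) ^ 2 = 4 - norm (1 + w) ^ 2"
proof -
  have "Re w ^ 2 + Im w ^ 2 = 1" using assms cmod_power2[of w] by simp
  moreover have "norm (w - 1) ^ 2 = (Re w - 1) ^ 2 + Im w ^ 2" by (simp add: cmod_power2)
  moreover have "norm (1 + w) ^ 2 = (1 + Re w) ^ 2 + Im w ^ 2" by (simp add: cmod_power2)
  ultimately show ?thesis by (simp add: power2_eq_square algebra_simps)
qed

lemma pair_to_1:
  assumes d: "d \<in> D" "d' \<in> D" and r: "(\<lambda>j. rho (y j)) \<longlonglongrightarrow> 1"
  shows "(\<lambda>j. e ((real d - real d') * y j)) \<longlonglongrightarrow> 1"
proof (cases "d = d'")
  case True then show ?thesis by simp
next
  case False
  define w where "w j = e ((real d - real d') * y j)" for j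
  have mpos: "real m > 0" using m2 by simp
  have bound: "real m * rho (y j) - (real m - 2) \<le> norm (1 + w j)" for j
  proof -
    let ?f = "\<lambda>c. e (real c * y j)"
    have "Q (y j) = ?f d + (\<Sum>c\<in>D - {d}. ?f c)" unfolding Q_def using d finD by (simp add: sum.remove)
    also have "(\<Sum>c\<in>D - {d}. ?f c) = ?f d' + (\<Sum>c\<in>D - {d} - {d'}. ?f c)"
      using d finD False by (intro sum.remove) auto
    finally have Qs: "Q (y j) = (?f d + ?f d') + (\<Sum>c\<in>D - {d} - {d'}. ?f c)" by (simp add: add.assoc)
    have "norm (\<Sum>c\<in>D - {d} - {d'}. ?f c) \<le> (\<Sum>c\<in>D - {d} - {d'}. norm (?f c))" by (rule norm_sum)
    also have "\<dots> = real (card (D - {d} - {d'}))" by simp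
    also have "\<dots> = real m - 2" using d False finD card2 by (simp add: m_def card_Diff_singleton_if of_nat_diff)
    finally have rest: "norm (\<Sum>c\<in>D - {d} - {d'}. ?f c) \<le> real m - 2" .
    have "?f d + ?f d' = ?f d' * (1 + w j)"
    proof -
      have "?f d = w j * ?f d'" unfolding w_def by (simp flip: e_add add: algebra_simps)
      then show ?thesis by (simp add: algebra_simps)
    qed
    then have n2: "norm (?f d + ?f d') = norm (1 + w j)" by (simp add: norm_mult)
    have "norm (Q (y j)) \<le> norm (?f d + ?f d') + norm (\<Sum>c\<in>D - {d} - {d'}. ?f c)"
      unfolding Qs by (rule norm_triangle_ineq)
    then have "norm (Q (y j)) \<le> norm (1 + w j) + (real m - 2)"
      using n2 rest by linarith
    moreover have "real m * rho (y j) = norm (Q (y j))" unfolding rho_def using mpos by simp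
    ultimately show ?thesis by simp
  qed
  have up: "norm (1 + w j) \<le> 2" for j
    using norm_triangle_ineq[of 1 "w j"] unfolding w_def by simp
  have "(\<lambda>j. real m * rho (y j) - (real m - 2)) \<longlonglongrightarrow> real m * 1 - (real m - 2)"
    using r by (intro tendsto_intros)
  then have lo: "(\<lambda>j. real m * rho (y j) - (real m - 2)) \<longlonglongrightarrow> 2" by simp
  have u2: "(\<lambda>j. norm (1 + w j)) \<longlonglongrightarrow> 2"
    by (rule tendsto_sandwich[OF _ _ lo tendsto_const]) (auto simp: bound up)
  have "(\<lambda>j. sqrt (4 - norm (1 + w j) ^ 2)) \<longlonglongrightarrow> sqrt (4 - 2 ^ 2)"
    using u2 by (intro tendsto_intros)
  moreover have "sqrt (4 - norm (1 + w j) ^ 2) = norm (w j - 1)" for j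
    using unit_identity[of "w j"] unfolding w_def by (simp add: real_sqrt_unique)
  ultimately have "(\<lambda>j. norm (w j - 1)) \<longlonglongrightarrow> 0" by simp
  then have "(\<lambda>j. w j - 1) \<longlonglongrightarrow> 0" by (simp add: tendsto_norm_zero_iff)
  then show ?thesis unfolding w_def by (simp add: LIM_zero_iff)
qed

lemma gcd_to_1:
  assumes "finite K" "\<forall>k\<in>K. (\<lambda>j. e (of_int k * y j)) \<longlonglongrightarrow> 1"
  shows "(\<lambda>j. e (of_int (Gcd K) * y j)) \<longlonglongrightarrow> 1"
  using assms
proof (induction K rule: finite_induct)
  case empty then show ?case by simp
next
  case (insert k K)
  have g: "(\<lambda>j. e (of_int (Gcd K) * y j)) \<longlonglongrightarrow> 1" using insert by simp
  have k: "(\<lambda>j. e (of_int k * y j)) \<longlonglongrightarrow> 1" using insert by simp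
  obtain u v where uv: "u * k + v * Gcd K = gcd k (Gcd K)" using bezout_int by blast
  have eq: "e (of_int (Gcd (insert k K)) * y j) = e (of_int k * y j) powi u * e (of_int (Gcd K) * y j) powi v" for j
  proof -
    have "of_int (Gcd (insert k K)) * y j = of_int u * (of_int k * y j) + of_int v * (of_int (Gcd K) * y j)"
    proof -
      have G: "real_of_int (Gcd (insert k K)) = of_int u * of_int k + of_int v * of_int (Gcd K)"
        using uv by (metis Gcd_insert of_int_add of_int_mult)
      show ?thesis unfolding G by (simp add: algebra_simps)
    qed
    then show ?thesis by (simp add: e_add e_int_mult)
  qed
  have "(\<lambda>j. e (of_int k * y j) powi u * e (of_int (Gcd K) * y j) powi v) \<longlonglongrightarrow> 1 powi u * 1 powi v"
    using k g by (intro tendsto_intros) auto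
  then show ?case unfolding eq by simp
qed

lemma s_to_1:
  assumes r: "(\<lambda>j. rho (y j)) \<longlonglongrightarrow> 1"
  shows "(\<lambda>j. e (of_int (sD D) * y j)) \<longlonglongrightarrow> 1"
proof -
  define K where "K = {int d - int d' | d d'. d \<in> D \<and> d' \<in> D}"
  have "K = (\<lambda>(d,d'). int d - int d') ` (D \<times> D)" unfolding K_def by auto
  then have fK: "finite K" using finD by simp
  have "\<forall>k\<in>K. (\<lambda>j. e (of_int k * y j)) \<longlonglongrightarrow> 1"
  proof
    fix k assume "k \<in> K"
    then obtain d d' where "d \<in> D" "d' \<in> D" "k = int d - int d'" unfolding K_def by blast
    then show "(\<lambda>j. e (of_int k * y j)) \<longlonglongrightarrow> 1" using pair_to_1[OF _ _ r] by simp
  qed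
  then show ?thesis using gcd_to_1[OF fK] unfolding sD_def K_def by blast
qed

end

context dig begin

lemma dich:
  assumes np: "\<not> (\<lambda>t. \<Prod>j<t. rho (real b ^ j * \<alpha> + \<beta>)) \<longlonglongrightarrow> 0"
  shows "\<exists>J. \<forall>j\<ge>J. of_int (sD D) * (real b ^ j * \<alpha> + \<beta>) \<in> \<int>"
proof -
  define s where "s = real_of_int (sD D)"
  define x where "x j = real b ^ j * \<alpha> + \<beta>" for j
  define z where "z j = e (s * x j)" for j
  have zt: "z \<longlonglongrightarrow> 1" unfolding z_def s_def x_def
    using s_to_1[OF rho_to_1[OF np]] .
  define c0 where "c0 = e (- (real b - 1) * s * \<beta>)"
  have rec: "z (Suc j) = z j ^ b * c0" for j
  proof -
    have "s * x (Suc j) = of_nat b * (s * x j) + (- (real b - 1) * s * \<beta>)"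
      unfolding x_def by (simp add: algebra_simps)
    then show ?thesis unfolding z_def c0_def by (simp add: e_add e_nat_mult)
  qed
  have zn: "norm (z j) = 1" for j unfolding z_def by simp
  have znz: "z j \<noteq> 0" for j using zn[of j] by auto
  have "(\<lambda>j. z (Suc j) / z j ^ b) \<longlonglongrightarrow> 1 / 1 ^ b"
    using zt by (intro tendsto_intros LIMSEQ_Suc) auto
  moreover have "z (Suc j) / z j ^ b = c0" for j using rec znz by simp
  ultimately have "(\<lambda>j. c0) \<longlonglongrightarrow> 1" by simp
  then have c01: "c0 = 1" by (simp add: LIMSEQ_const_iff)
  have zrec: "z (Suc j) = z j ^ b" for j using rec c01 by simp
  have "(\<lambda>j. \<Sum>i<b. z j ^ i) \<longlonglongrightarrow> (\<Sum>i<b. 1 ^ i)"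
    using zt by (intro tendsto_intros)
  then have St: "(\<lambda>j. \<Sum>i<b. z j ^ i) \<longlonglongrightarrow> of_nat b" by simp
  then have "\<forall>\<^sub>F j in sequentially. dist (\<Sum>i<b. z j ^ i) (of_nat b) < 1"
    by (intro tendstoD) auto
  then obtain J0 where J0: "\<forall>j\<ge>J0. dist (\<Sum>i<b. z j ^ i) (of_nat b) < 1"
    unfolding eventually_sequentially by blast
  define a where "a j = norm (z j - 1)" for j
  have step: "a j \<le> a (Suc j)" if "j \<ge> J0" for j
  proof -
    have d: "norm ((\<Sum>i<b. z j ^ i) - of_nat b) < 1" using J0 that by (simp add: dist_norm)
    have t1: "norm (of_nat b :: complex) \<le> norm (\<Sum>i<b. z j ^ i) + norm (of_nat b - (\<Sum>i<b. z j ^ i))"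
      by (rule norm_triangle_sub)
    have "norm (of_nat b - (\<Sum>i<b. z j ^ i)) = norm ((\<Sum>i<b. z j ^ i) - of_nat b)" by (rule norm_minus_commute)
    then have "norm (of_nat b :: complex) \<le> norm (\<Sum>i<b. z j ^ i) + norm ((\<Sum>i<b. z j ^ i) - of_nat b)"
      using t1 by simp
    then have nS: "norm (\<Sum>i<b. z j ^ i) \<ge> 1" using d b3 by simp
    have "z (Suc j) - 1 = (z j - 1) * (\<Sum>i<b. z j ^ i)" unfolding zrec by (rule power_diff_1_eq)
    then have "a (Suc j) = a j * norm (\<Sum>i<b. z j ^ i)" unfolding a_def by (simp add: norm_mult)
    moreover have "a j \<ge> 0" unfolding a_def by simp
    ultimately show ?thesis using nS by (metis mult_le_cancel_left1 order_less_irrefl not_le mult_left_mono mult.right_neutral)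
  qed
  have mono: "a j \<le> a (j + k)" if "j \<ge> J0" for j k
  proof (induction k)
    case 0 then show ?case by simp
  next
    case (Suc k)
    have "a (j + k) \<le> a (Suc (j + k))" using step that by simp
    then show ?case using Suc by simp
  qed
  have at: "a \<longlonglongrightarrow> 0"
  proof -
    have "(\<lambda>j. norm (z j - 1)) \<longlonglongrightarrow> norm (1 - 1 :: complex)" using zt by (intro tendsto_intros)
    then show ?thesis unfolding a_def by simp
  qed
  have "\<forall>j\<ge>J0. z j = 1"
  proof (intro allI impI)
    fix j assume "j \<ge> J0"
    have "a j \<le> 0"
    proof (rule LIMSEQ_le_const[OF at])
      show "\<exists>N. \<forall>n\<ge>N. a j \<le> a n"
      proof (intro exI[of _ j] allI impI)
        fix n assume "n \<ge> j"
        then show "a j \<le> a n" using mono[OF \<open>j \<ge> J0\<close>, of "n - j"] by simp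
      qed
    qed
    then show "z j = 1" unfolding a_def by simp
  qed
  then show ?thesis unfolding z_def s_def x_def e_eq_1_iff by blast
qed

end

lemma exc_from_J:
  fixes b :: nat and c :: int
  assumes b: "b \<ge> 2"
    and h1: "of_int c * (real b ^ J * \<alpha> + \<beta>) \<in> \<int>"
    and h2: "of_int c * (real b ^ Suc J * \<alpha> + \<beta>) \<in> \<int>"
  shows "exceptional b c \<alpha> \<beta>"
proof -
  obtain N1 where N1: "of_int c * (real b ^ J * \<alpha> + \<beta>) = of_int N1" using h1 Ints_cases by metis
  obtain N2 where N2: "of_int c * (real b ^ Suc J * \<alpha> + \<beta>) = of_int N2" using h2 Ints_cases by metis
  define n where "n = int b * N1 - N2"
  define bm where "bm = real b - 1"
  define X where "X = real b ^ J"
  have bm0: "bm > 0" unfolding bm_def using b by simp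
  have X0: "X > 0" unfolding X_def using b by simp
  have "real_of_int n = real b * of_int N1 - of_int N2" unfolding n_def by simp
  also have "\<dots> = real b * (of_int c * (real b ^ J * \<alpha> + \<beta>)) - of_int c * (real b ^ Suc J * \<alpha> + \<beta>)"
    using N1 N2 by simp
  also have "\<dots> = bm * (of_int c * \<beta>)" unfolding bm_def by (simp add: algebra_simps)
  finally have hn: "bm * (of_int c * \<beta>) = of_int n" by simp
  define G where "G = (\<Sum>i<J. real b ^ i)"
  have hG: "G * bm = X - 1" unfolding G_def bm_def X_def using power_diff_1_eq[of "real b" J] by (simp add: mult.commute)
  define Gi :: int where "Gi = (\<Sum>i<J. int b ^ i)"
  have GiG: "of_int Gi = G" unfolding Gi_def G_def by simp
  define a where "a = - n"
  define r where "r = N1 - a * Gi"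
  have cb: "of_int c * \<beta> = of_int n / bm" using hn bm0 by (simp add: field_simps)
  have hN1: "of_int N1 = of_int c * \<alpha> * X + of_int n / bm" using N1 cb unfolding X_def by (simp add: algebra_simps)
  have "of_int c * \<alpha> - (of_int a / (real b - 1) + of_int r / (real b powi int J)) = 0"
  proof -
    have "of_int c * \<alpha> - (of_int a / (real b - 1) + of_int r / (real b powi int J))
        = of_int c * \<alpha> + of_int n / bm - (of_int N1 + of_int n * G) / X"
      unfolding a_def r_def bm_def X_def by (simp add: GiG power_int_def)
    also have "\<dots> = of_int c * \<alpha> + of_int n / bm - (of_int c * \<alpha> * X + of_int n / bm + of_int n * G) / X"
      unfolding hN1 ..
    also have "\<dots> = of_int n * (X - 1 - G * bm) / (bm * X)"
      using bm0 X0 by (simp add: field_simps)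
    also have "\<dots> = 0" using hG by simp
    finally show ?thesis .
  qed
  moreover have "of_int c * \<beta> - (- of_int a / (real b - 1)) = 0"
    unfolding a_def using cb unfolding bm_def by simp
  ultimately show ?thesis unfolding exceptional_def cong1_def
    by (intro exI[of _ a] exI[of _ r] exI[of _ "int J"]) simp
qed

lemma rat_from_J:
  fixes b :: nat and c :: int
  assumes b: "b \<ge> 2" and c: "c \<noteq> 0"
    and h1: "of_int c * (real b ^ J * \<alpha> + \<beta>) \<in> \<int>"
    and h2: "of_int c * (real b ^ Suc J * \<alpha> + \<beta>) \<in> \<int>"
  shows "\<alpha> \<in> \<rat> \<and> \<beta> \<in> \<rat>"
proof -
  obtain N1 where N1: "of_int c * (real b ^ J * \<alpha> + \<beta>) = of_int N1" using h1 Ints_cases by metis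
  obtain N2 where N2: "of_int c * (real b ^ Suc J * \<alpha> + \<beta>) = of_int N2" using h2 Ints_cases by metis
  have bm0: "real b - 1 > 0" using b by simp
  have X0: "real b ^ J > 0" using b by simp
  have "real_of_int (int b * N1 - N2) = real b * of_int N1 - of_int N2" by simp
  also have "\<dots> = real b * (of_int c * (real b ^ J * \<alpha> + \<beta>)) - of_int c * (real b ^ Suc J * \<alpha> + \<beta>)"
    using N1 N2 by simp
  also have "\<dots> = (real b - 1) * (of_int c * \<beta>)" by (simp add: algebra_simps)
  finally have "(real b - 1) * (of_int c * \<beta>) = of_int (int b * N1 - N2)" by simp
  then have beq: "\<beta> = of_int (int b * N1 - N2) / ((real b - 1) * of_int c)" using bm0 c by (simp add: field_simps)
  then have bq: "\<beta> \<in> \<rat>" by simp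
  have "\<alpha> = (of_int N1 - of_int c * \<beta>) / (of_int c * real b ^ J)" using N1 X0 c by (simp add: field_simps)
  then have "\<alpha> \<in> \<rat>" using bq by simp
  then show ?thesis using bq by simp
qed



lemma cesaro_periodic:
  fixes f :: "nat \<Rightarrow> complex"
  assumes p: "p > 0" and per: "\<forall>n\<ge>N0. f (n + p) = f n"
  shows "convergent (\<lambda>N. (\<Sum>k<N. f k) / of_nat N)"
proof -
  define W where "W n = (\<Sum>k<p. f (n + k))" for n
  have Wstep: "W (Suc n) = W n" if "n \<ge> N0" for n
  proof -
    have "(\<Sum>k<Suc p. f (n + k)) = W n + f (n + p)" unfolding W_def by simp
    moreover have "(\<Sum>k<Suc p. f (n + k)) = f n + W (Suc n)" unfolding W_def
      by (subst sum.lessThan_Suc_shift) simp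
    ultimately show ?thesis using per that by simp
  qed
  have Wc: "W n = W N0" if "n \<ge> N0" for n
    using that
  proof (induction n rule: dec_induct)
    case base then show ?case by simp
  next
    case (step n) then show ?case using Wstep by simp
  qed
  define c where "c = W N0 / of_nat p"
  define G where "G N = (\<Sum>k<N. f k) - of_nat N * c" for N
  have Gp: "G (N + p) = G N" if "N \<ge> N0" for N
  proof -
    have "(\<Sum>k<N + p. f k) = (\<Sum>k<N. f k) + W N" unfolding W_def by (rule sum_split_add)
    then show ?thesis unfolding G_def c_def using Wc[OF that] p by (simp add: field_simps)
  qed
  define B where "B = Max ((\<lambda>N. norm (G N)) ` {..<N0 + p})"
  have Gb: "norm (G N) \<le> B" for N
  proof (induction N rule: less_induct)
    case (less N)
    show ?case
    proof (cases "N < N0 + p")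
      case True then show ?thesis unfolding B_def by (intro Max_ge) auto
    next
      case False
      then have "G N = G (N - p)" using Gp[of "N - p"] by simp
      moreover have "N - p < N" using p False by simp
      ultimately show ?thesis using less by simp
    qed
  qed
  have "(\<lambda>N. G N / of_nat N) \<longlonglongrightarrow> 0"
  proof (rule Lim_null_comparison)
    show "\<forall>\<^sub>F N in sequentially. norm (G N / of_nat N) \<le> B / real N"
      using Gb by (auto simp: norm_divide divide_right_mono)
    show "(\<lambda>N. B / real N) \<longlonglongrightarrow> 0" by (rule lim_const_over_n)
  qed
  then have "(\<lambda>N. c + G N / of_nat N) \<longlonglongrightarrow> c + 0" by (intro tendsto_intros)
  moreover have "\<forall>\<^sub>F N in sequentially. c + G N / of_nat N = (\<Sum>k<N. f k) / of_nat N"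
    unfolding eventually_sequentially
    by (intro exI[of _ 1] allI impI) (simp add: G_def field_simps)
  ultimately have "(\<lambda>N. (\<Sum>k<N. f k) / of_nat N) \<longlonglongrightarrow> c" using Lim_transform_eventually by fastforce
  then show ?thesis by (auto simp: convergent_def)
qed


context dig begin

lemma P_const1:
  assumes "\<forall>j. \<forall>i<m. e (real (dl i) * (real b ^ j * \<alpha> + \<beta>)) = 1"
  shows "P \<beta> \<alpha> n = 1"
  using assms
proof (induction n arbitrary: \<alpha> rule: less_induct)
  case (less n)
  show ?case
  proof (cases "n < m")
    case True
    have "digsum b (H n) = dl n" using True digsum_step[OF b2 dl_lt_b[OF True], of 0] by (simp add: H_simp)
    then have "P \<beta> \<alpha> n = e (real (dl n) * (real b ^ 0 * \<alpha> + \<beta>))"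
      unfolding P_def using True by (simp add: H_simp algebra_simps)
    moreover have "\<forall>i<m. e (real (dl i) * (real b ^ 0 * \<alpha> + \<beta>)) = 1" using less.prems by (rule spec)
    then have "e (real (dl n) * (real b ^ 0 * \<alpha> + \<beta>)) = 1" using True by simp
    ultimately show ?thesis by simp
  next
    case False
    define q where "q = n div m"
    define i where "i = n mod m"
    have n: "n = q * m + i" unfolding q_def i_def by simp
    have i: "i < m" unfolding i_def using m2 by simp
    have q1: "q \<ge> 1" unfolding q_def using False m2 by (simp add: le_div_geq)
    have qe: "q \<ge> ep" using q1 by (simp add: ep_def)
    have "n div m < n" using False m2 by (intro div_less_dividend) auto
    then have "q - ep < n" unfolding q_def by linarith
    moreover have "\<forall>j. \<forall>i<m. e (real (dl i) * (real b ^ j * (real b * \<alpha>) + \<beta>)) = 1"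
    proof (intro allI impI)
      fix j k assume "k < m"
      then show "e (real (dl k) * (real b ^ j * (real b * \<alpha>) + \<beta>)) = 1"
      proof -
        have "\<forall>i<m. e (real (dl i) * (real b ^ Suc j * \<alpha> + \<beta>)) = 1" using less.prems by (rule spec)
        then show ?thesis using \<open>k < m\<close> by (simp add: mult_ac)
      qed
    qed
    ultimately have "P \<beta> (real b * \<alpha>) (q - ep) = 1" using less.IH by blast
    moreover have "e (real (dl i) * (\<alpha> + \<beta>)) = 1"
    proof -
      have "\<forall>i<m. e (real (dl i) * (real b ^ 0 * \<alpha> + \<beta>)) = 1" using less.prems by (rule spec)
      then show ?thesis using i by simp
    qed
    ultimately show ?thesis unfolding n using P_block[OF qe i] by simp
  qed
qed

lemma P_periodic:
  assumes "\<forall>j\<ge>J. \<forall>i<m. e (real (dl i) * (real b ^ j * \<alpha> + \<beta>)) = 1"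
  shows "\<exists>N0. \<forall>n\<ge>N0. P \<beta> \<alpha> (n + m ^ J) = P \<beta> \<alpha> n"
  using assms
proof (induction J arbitrary: \<alpha>)
  case 0
  then show ?case using P_const1[of \<alpha> \<beta>] by auto
next
  case (Suc J)
  have "\<forall>j\<ge>J. \<forall>i<m. e (real (dl i) * (real b ^ j * (real b * \<alpha>) + \<beta>)) = 1"
  proof (intro allI impI)
    fix j k assume "J \<le> j" "k < m"
    then show "e (real (dl k) * (real b ^ j * (real b * \<alpha>) + \<beta>)) = 1"
    proof -
      have "Suc j \<ge> Suc J" using \<open>J \<le> j\<close> by simp
      then have "\<forall>i<m. e (real (dl i) * (real b ^ Suc j * \<alpha> + \<beta>)) = 1" using Suc.prems by blast
      then show ?thesis using \<open>k < m\<close> by (simp add: mult_ac)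
    qed
  qed
  then obtain N0 where N0: "\<forall>n\<ge>N0. P \<beta> (real b * \<alpha>) (n + m ^ J) = P \<beta> (real b * \<alpha>) n"
    using Suc.IH by blast
  show ?case
  proof (intro exI[of _ "m * (N0 + 2)"] allI impI)
    fix n assume nN: "m * (N0 + 2) \<le> n"
    define q where "q = n div m"
    define i where "i = n mod m"
    have n: "n = q * m + i" unfolding q_def i_def by simp
    have i: "i < m" unfolding i_def using m2 by simp
    have "(m * (N0 + 2)) div m \<le> n div m" by (rule div_le_mono[OF nN])
    then have qN: "q \<ge> N0 + 2" unfolding q_def using m2 by simp
    have ep1: "ep \<le> 1" by (simp add: ep_def)
    have qe: "q \<ge> ep" "q + m ^ J \<ge> ep" using qN ep1 by auto
    have n2: "n + m ^ Suc J = (q + m ^ J) * m + i" unfolding n by (simp add: algebra_simps)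
    have "P \<beta> \<alpha> (n + m ^ Suc J) = e (real (dl i) * (\<alpha> + \<beta>)) * P \<beta> (real b * \<alpha>) (q + m ^ J - ep)"
      unfolding n2 using P_block[OF qe(2) i] .
    also have "\<dots> = e (real (dl i) * (\<alpha> + \<beta>)) * P \<beta> (real b * \<alpha>) (q - ep)"
    proof -
      have eqi: "q + m ^ J - ep = (q - ep) + m ^ J" using qe by simp
      have "P \<beta> (real b * \<alpha>) ((q - ep) + m ^ J) = P \<beta> (real b * \<alpha>) (q - ep)"
      proof -
        have "q - ep \<ge> N0" using qN ep1 by linarith
        then show ?thesis using N0 by blast
      qed
      then show ?thesis unfolding eqi by simp
    qed
    also have "e (real (dl i) * (\<alpha> + \<beta>)) * P \<beta> (real b * \<alpha>) (q - ep) = P \<beta> \<alpha> n"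
      unfolding n using P_block[OF qe(1) i] by simp
    finally show "P \<beta> \<alpha> (n + m ^ Suc J) = P \<beta> \<alpha> n" .
  qed
qed

lemma sD_pos: "sD D > 0"
proof -
  have "dl 0 \<in> D" "dl 1 \<in> D" "dl 0 < dl 1" using dl_in dl_mono m2 by auto
  then have k: "int (dl 1) - int (dl 0) \<in> {int d - int d' | d d'. d \<in> D \<and> d' \<in> D}" "int (dl 1) - int (dl 0) \<noteq> 0" by auto
  have "sD D dvd int (dl 1) - int (dl 0)" unfolding sD_def using k(1) by (rule Gcd_dvd)
  then have "sD D \<noteq> 0" using k(2) by auto
  moreover have "sD D \<ge> 0" unfolding sD_def by simp
  ultimately show ?thesis by simp
qed

abbreviation pr where "pr \<alpha> \<beta> \<equiv> (\<lambda>t. \<Prod>j<t. rho (real b ^ j * \<alpha> + \<beta>))"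

lemma avgC_to_0: "pr \<alpha> \<beta> \<longlonglongrightarrow> 0 \<Longrightarrow> avgC b D \<alpha> \<beta> \<longlonglongrightarrow> 0"
  unfolding avgC_WS by (rule avg_to_0)

lemma not_exc_p0: "\<not> exceptional b (sD D) \<alpha> \<beta> \<Longrightarrow> pr \<alpha> \<beta> \<longlonglongrightarrow> 0"
proof (rule ccontr)
  assume a: "\<not> exceptional b (sD D) \<alpha> \<beta>" "\<not> pr \<alpha> \<beta> \<longlonglongrightarrow> 0"
  obtain J where J: "\<forall>j\<ge>J. of_int (sD D) * (real b ^ j * \<alpha> + \<beta>) \<in> \<int>" using dich[OF a(2)] by blast
  have "exceptional b (sD D) \<alpha> \<beta>"
    by (rule exc_from_J[OF b2 J[rule_format, OF order_refl] J[rule_format, OF le_SucI[OF order_refl]]])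
  then show False using a(1) by blast
qed

lemma irr_p0: "\<alpha> \<notin> \<rat> \<or> \<beta> \<notin> \<rat> \<Longrightarrow> pr \<alpha> \<beta> \<longlonglongrightarrow> 0"
proof (rule ccontr)
  assume a: "\<alpha> \<notin> \<rat> \<or> \<beta> \<notin> \<rat>" "\<not> pr \<alpha> \<beta> \<longlonglongrightarrow> 0"
  obtain J where J: "\<forall>j\<ge>J. of_int (sD D) * (real b ^ j * \<alpha> + \<beta>) \<in> \<int>" using dich[OF a(2)] by blast
  have "\<alpha> \<in> \<rat> \<and> \<beta> \<in> \<rat>" using sD_pos
    by (intro rat_from_J[OF b2 _ J[rule_format, OF order_refl] J[rule_format, OF le_SucI[OF order_refl]]]) auto
  then show False using a(1) by blast
qed

lemma conv_part:
  assumes dv: "\<forall>d\<in>D. sD D dvd int d"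
  shows "convergent (avgC b D \<alpha> \<beta>) \<and> (lim (avgC b D \<alpha> \<beta>) \<noteq> 0 \<longrightarrow> exceptional b (sD D) \<alpha> \<beta>)"
proof (cases "pr \<alpha> \<beta> \<longlonglongrightarrow> 0")
  case True
  then have "avgC b D \<alpha> \<beta> \<longlonglongrightarrow> 0" by (rule avgC_to_0)
  then show ?thesis by (auto simp: convergent_def limI)
next
  case False
  obtain J where J: "\<forall>j\<ge>J. of_int (sD D) * (real b ^ j * \<alpha> + \<beta>) \<in> \<int>" using dich[OF False] by blast
  have exc: "exceptional b (sD D) \<alpha> \<beta>"
    by (rule exc_from_J[OF b2 J[rule_format, OF order_refl] J[rule_format, OF le_SucI[OF order_refl]]])
  have "\<forall>j\<ge>J. \<forall>i<m. e (real (dl i) * (real b ^ j * \<alpha> + \<beta>)) = 1"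
  proof (intro allI impI)
    fix j i assume "J \<le> j" "i < m"
    then have "sD D dvd int (dl i)" using dv dl_in by blast
    then obtain k where k: "int (dl i) = sD D * k" by blast
    have "real (dl i) = real_of_int (int (dl i))" by simp
    also have "\<dots> = of_int (sD D * k)" using k by simp
    also have "\<dots> = of_int k * of_int (sD D)" by simp
    finally have r: "real (dl i) = of_int k * of_int (sD D)" .
    have eq: "real (dl i) * (real b ^ j * \<alpha> + \<beta>) = of_int k * (of_int (sD D) * (real b ^ j * \<alpha> + \<beta>))"
      unfolding r by (simp add: mult_ac)
    have "of_int (sD D) * (real b ^ j * \<alpha> + \<beta>) \<in> \<int>" using J \<open>J \<le> j\<close> by blast
    then have "of_int k * (of_int (sD D) * (real b ^ j * \<alpha> + \<beta>)) \<in> \<int>" by (rule Ints_mult[OF Ints_of_int])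
    then have "real (dl i) * (real b ^ j * \<alpha> + \<beta>) \<in> \<int>" unfolding eq .
    then show "e (real (dl i) * (real b ^ j * \<alpha> + \<beta>)) = 1" by (simp add: e_eq_1_iff)
  qed
  then obtain N0 where "\<forall>n\<ge>N0. P \<beta> \<alpha> (n + m ^ J) = P \<beta> \<alpha> n" using P_periodic by blast
  then have "convergent (\<lambda>N. (\<Sum>k<N. P \<beta> \<alpha> k) / of_nat N)"
    using m2 by (intro cesaro_periodic[of "m ^ J" N0]) auto
  moreover have "avgC b D \<alpha> \<beta> = (\<lambda>N. (\<Sum>k<N. P \<beta> \<alpha> k) / of_nat N)"
    by (rule ext) (simp add: avgC_WS WS_def)
  ultimately show ?thesis using exc by simp
qed

lemma uniform_part:
  assumes "\<alpha> \<notin> \<rat> \<or> \<beta> \<notin> \<rat>" "\<eta> > 0"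
  shows "\<exists>L::nat. \<forall>M N::nat. M < N \<and> N - M \<ge> L \<longrightarrow>
           norm ((\<Sum>n\<in>{M<..N}. term_e b D \<alpha> \<beta> n) / of_nat (N - M)) < \<eta>"
proof -
  obtain L0 where L0: "\<forall>M L. L \<ge> L0 \<and> L > 0 \<longrightarrow> norm (WS \<beta> \<alpha> M L) / real L < \<eta>"
    using uniform_from_prod[OF irr_p0[OF assms(1)] assms(2)] by blast
  show ?thesis
  proof (intro exI[of _ L0] allI impI)
    fix M N :: nat assume a: "M < N \<and> L0 \<le> N - M"
    have imp: "L0 \<le> N - M \<and> 0 < N - M \<longrightarrow> norm (WS \<beta> \<alpha> M (N - M)) / real (N - M) < \<eta>"
      by (rule spec[OF spec[OF L0, of M], of "N - M"])
    have "L0 \<le> N - M \<and> 0 < N - M" using a by simp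
    then have "norm (WS \<beta> \<alpha> M (N - M)) / real (N - M) < \<eta>" using imp by blast
    moreover have eq: "(\<Sum>n\<in>{M<..N}. term_e b D \<alpha> \<beta> n) = WS \<beta> \<alpha> M (N - M)"
      using a window_WS[of M N \<alpha> \<beta>] by simp
    moreover have "norm ((\<Sum>n\<in>{M<..N}. term_e b D \<alpha> \<beta> n) / of_nat (N - M)) = norm (WS \<beta> \<alpha> M (N - M)) / real (N - M)"
      unfolding eq norm_divide norm_of_nat ..
    ultimately show "norm ((\<Sum>n\<in>{M<..N}. term_e b D \<alpha> \<beta> n) / of_nat (N - M)) < \<eta>" by simp
  qed
qed

end


theorem mainTheorem6:
  fixes b :: nat and D :: "nat set"
  assumes hb: "b \<ge> 3"
    and hD: "D \<subseteq> {0..<b}"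
    and hcard: "2 \<le> card D" "card D \<le> b"
  shows
    "(sD D = 1 \<longrightarrow>
        (\<forall>\<alpha> \<beta>. convergent (avgC b D \<alpha> \<beta>) \<and>
           (lim (avgC b D \<alpha> \<beta>) \<noteq> 0 \<longrightarrow> exceptional b 1 \<alpha> \<beta>)))
   \<and> (sD D > 1 \<and> (\<forall>d\<in>D. sD D dvd int d) \<longrightarrow>
        (\<forall>\<alpha> \<beta>. convergent (avgC b D \<alpha> \<beta>) \<and>
           (lim (avgC b D \<alpha> \<beta>) \<noteq> 0 \<longrightarrow> exceptional b (sD D) \<alpha> \<beta>)))
   \<and> (sD D > 1 \<and> (\<exists>d\<in>D. \<not> sD D dvd int d) \<longrightarrow>
        (\<forall>\<alpha> \<beta>. \<not> exceptional b (sD D) \<alpha> \<beta> \<longrightarrow> avgC b D \<alpha> \<beta> \<longlonglongrightarrow> 0))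
   \<and> (\<forall>\<alpha> \<beta>. (\<alpha> \<notin> \<rat> \<or> \<beta> \<notin> \<rat>) \<longrightarrow>
        (\<forall>\<eta>>0. \<exists>L::nat. \<forall>M N::nat. M < N \<and> N - M \<ge> L \<longrightarrow>
           norm ((\<Sum>n\<in>{M<..N}. term_e b D \<alpha> \<beta> n) / of_nat (N - M)) < \<eta>))"
proof -
  interpret dig b D using hb hD hcard by unfold_locales auto
  have p1: "sD D = 1 \<longrightarrow>
        (\<forall>\<alpha> \<beta>. convergent (avgC b D \<alpha> \<beta>) \<and>
           (lim (avgC b D \<alpha> \<beta>) \<noteq> 0 \<longrightarrow> exceptional b 1 \<alpha> \<beta>))"
  proof (intro impI allI)
    fix \<alpha> \<beta> assume s1: "sD D = 1"
    then show "convergent (avgC b D \<alpha> \<beta>) \<and> (lim (avgC b D \<alpha> \<beta>) \<noteq> 0 \<longrightarrow> exceptional b 1 \<alpha> \<beta>)"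
      using conv_part[of \<alpha> \<beta>] by simp
  qed
  have p2: "sD D > 1 \<and> (\<forall>d\<in>D. sD D dvd int d) \<longrightarrow>
        (\<forall>\<alpha> \<beta>. convergent (avgC b D \<alpha> \<beta>) \<and>
           (lim (avgC b D \<alpha> \<beta>) \<noteq> 0 \<longrightarrow> exceptional b (sD D) \<alpha> \<beta>))"
    using conv_part by blast
  have p3: "sD D > 1 \<and> (\<exists>d\<in>D. \<not> sD D dvd int d) \<longrightarrow>
        (\<forall>\<alpha> \<beta>. \<not> exceptional b (sD D) \<alpha> \<beta> \<longrightarrow> avgC b D \<alpha> \<beta> \<longlonglongrightarrow> 0)"
    using not_exc_p0 avgC_to_0 by blast
  have p4: "\<forall>\<alpha> \<beta>. (\<alpha> \<notin> \<rat> \<or> \<beta> \<notin> \<rat>) \<longrightarrow>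
        (\<forall>\<eta>>0. \<exists>L::nat. \<forall>M N::nat. M < N \<and> N - M \<ge> L \<longrightarrow>
           norm ((\<Sum>n\<in>{M<..N}. term_e b D \<alpha> \<beta> n) / of_nat (N - M)) < \<eta>)"
    using uniform_part by blast
  show ?thesis using p1 p2 p3 p4 by blast
qed



end
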